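(* Let $(\Omega,+)$ be a group and $a,b$ subgroups with $a\top b$. Identify $\Omega$ with $a\times b$ via the bijection $(\alpha,\beta)\mapsto\alpha+\beta$, so that every subset of $\Omega$ is a relation between $a$ and $b$. For $x,y,z\subseteq\Omega$ define the ternary composition of relations $z\circ y^{-1}\circ x:=\{\alpha'+\beta' : \alpha'\in a,\beta'\in b,\ \exists \alpha''\in a,\beta''\in b \text{ with } \alpha''+\beta''\in y,\ \alpha'+\beta''\in x,\ \alpha''+\beta'\in z\}$. Then $z\circ y^{-1}\circ x=\Gamma(x,a,y,b,z)$ for all $x,y,z\subseteq\Omega$. If moreover $a$ and $b$ commute (every element of $a$ commutes with every element of $b$), then the set of subgroups of $\Omega$ is stable under this ternary law.
   Context: $(\Omega,+)$ is a group written additively but not necessarily abelian. For subsets $x,y\subseteq\Omega$, $x\top y$ means every $\omega\in\Omega$ has a unique decomposition $\omega=\xi+\eta$ with $\xi\in x$, $\eta\in y$. For subsets $x,a,y,b,z$: $\Gamma(x,a,y,b,z)=\{\omega\in\Omega:\exists\alpha\in a,\beta\in b:\ \alpha+\omega+\beta\in y,\ \alpha+\omega\in z,\ \omega+\beta\in x\}$. *)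

theory Defs
  imports Main
begin

definition is_subgroup :: "'a::group_add set \<Rightarrow> bool" where
  "is_subgroup H \<longleftrightarrow> 0 \<in> H \<and> (\<forall>x\<in>H. \<forall>y\<in>H. x + y \<in> H) \<and> (\<forall>x\<in>H. - x \<in> H)"

definition top_rel :: "'a::group_add set \<Rightarrow> 'a set \<Rightarrow> bool" where
  "top_rel x y \<longleftrightarrow> (\<forall>\<omega>. \<exists>!p. p \<in> x \<times> y \<and> \<omega> = fst p + snd p)"

definition Gamma :: "'a::group_add set \<Rightarrow> 'a set \<Rightarrow> 'a set \<Rightarrow> 'a set \<Rightarrow> 'a set \<Rightarrow> 'a set" where
  "Gamma x a y b z = {\<omega>. \<exists>\<alpha>\<in>a. \<exists>\<beta>\<in>b. \<alpha> + \<omega> + \<beta> \<in> y \<and> \<alpha> + \<omega> \<in> z \<and> \<omega> + \<beta> \<in> x}"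

definition tern :: "'a::group_add set \<Rightarrow> 'a set \<Rightarrow> 'a set \<Rightarrow> 'a set \<Rightarrow> 'a set \<Rightarrow> 'a set" where
  "tern a b x y z = {\<alpha>' + \<beta>' | \<alpha>' \<beta>'. \<alpha>' \<in> a \<and> \<beta>' \<in> b \<and>
     (\<exists>\<alpha>''\<in>a. \<exists>\<beta>''\<in>b. \<alpha>'' + \<beta>'' \<in> y \<and> \<alpha>' + \<beta>'' \<in> x \<and> \<alpha>'' + \<beta>' \<in> z)}"

end

theory Submission
  imports Defs
begin

lemma rearr:
  fixes a1 b1 a2 b2 :: "'a::group_add"
  assumes "b1 + a2 = a2 + b1"
  shows "(a1 + b1) + (a2 + b2) = (a1 + a2) + (b1 + b2)"
proof -
  have "(a1 + b1) + (a2 + b2) = a1 + (b1 + a2) + b2" by (simp add: add.assoc)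
  also have "\<dots> = a1 + (a2 + b1) + b2" using assms by simp
  also have "\<dots> = (a1 + a2) + (b1 + b2)" by (simp add: add.assoc)
  finally show ?thesis .
qed

lemma negcomm:
  fixes p q :: "'a::group_add"
  assumes "(-p) + (-q) = (-q) + (-p)"
  shows "- (p + q) = (-p) + (-q)"
  using assms by (simp add: minus_add)

lemma part1:
  fixes a b :: "'a::group_add set"
  assumes sa: "is_subgroup a" and sb: "is_subgroup b" and t: "top_rel a b"
  shows "tern a b x y z = Gamma x a y b z"
proof
  show "tern a b x y z \<subseteq> Gamma x a y b z"
  proof
    fix w assume "w \<in> tern a b x y z"
    then obtain a1 b1 a2 b2 where w: "w = a1 + b1" and h: "a1 \<in> a" "b1 \<in> b" "a2 \<in> a" "b2 \<in> b"
      "a2 + b2 \<in> y" "a1 + b2 \<in> x" "a2 + b1 \<in> z"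
      unfolding tern_def by blast
    have A: "a2 - a1 \<in> a" using sa h unfolding is_subgroup_def by (metis diff_conv_add_uminus)
    have B: "- b1 + b2 \<in> b" using sb h unfolding is_subgroup_def by simp
    have e1: "(a2 - a1) + w + (- b1 + b2) = a2 + b2" unfolding w by (simp add: add.assoc[symmetric])
    have e2: "(a2 - a1) + w = a2 + b1" unfolding w by (simp add: add.assoc[symmetric])
    have e3: "w + (- b1 + b2) = a1 + b2" unfolding w by (simp add: add.assoc)
    show "w \<in> Gamma x a y b z" unfolding Gamma_def
    proof (intro CollectI bexI conjI)
      show "a2 - a1 + w + (- b1 + b2) \<in> y" using e1 h(5) by simp
      show "a2 - a1 + w \<in> z" using e2 h(7) by simp
      show "w + (- b1 + b2) \<in> x" using e3 h(6) by simp
    qed (use A B in simp_all)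
  qed
next
  show "Gamma x a y b z \<subseteq> tern a b x y z"
  proof
    fix w assume "w \<in> Gamma x a y b z"
    then obtain p q where pq: "p \<in> a" "q \<in> b" "p + w + q \<in> y" "p + w \<in> z" "w + q \<in> x"
      unfolding Gamma_def by blast
    from t obtain pr where "pr \<in> a \<times> b" "w = fst pr + snd pr" unfolding top_rel_def by blast
    then obtain a1 b1 where ab: "a1 \<in> a" "b1 \<in> b" "w = a1 + b1" by auto
    have A: "p + a1 \<in> a" using sa pq ab unfolding is_subgroup_def by simp
    have B: "b1 + q \<in> b" using sb pq ab unfolding is_subgroup_def by simp
    have e1: "(p + a1) + (b1 + q) = p + w + q" using ab by (simp add: add.assoc)
    have e2: "a1 + (b1 + q) = w + q" using ab by (simp add: add.assoc)
    have e3: "(p + a1) + b1 = p + w" using ab by (simp add: add.assoc)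
    show "w \<in> tern a b x y z" unfolding tern_def
    proof (intro CollectI exI conjI bexI)
      show "w = a1 + b1" by (fact ab(3))
      show "p + a1 + (b1 + q) \<in> y" using e1 pq(3) by simp
      show "a1 + (b1 + q) \<in> x" using e2 pq(5) by simp
      show "p + a1 + b1 \<in> z" using e3 pq(4) by simp
    qed (use A B ab in simp_all)
  qed
qed

lemma sg0: "is_subgroup H \<Longrightarrow> 0 \<in> H" unfolding is_subgroup_def by blast
lemma sgadd: "is_subgroup H \<Longrightarrow> u \<in> H \<Longrightarrow> v \<in> H \<Longrightarrow> u + v \<in> H" unfolding is_subgroup_def by blast
lemma sgneg: "is_subgroup H \<Longrightarrow> u \<in> H \<Longrightarrow> - u \<in> H" unfolding is_subgroup_def by blast

lemma ternI:
  assumes "w = a1 + b1" "a1 \<in> a" "b1 \<in> b" "a2 \<in> a" "b2 \<in> b"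
      "a2 + b2 \<in> y" "a1 + b2 \<in> x" "a2 + b1 \<in> z"
  shows "w \<in> tern a b x y z"
  unfolding tern_def using assms by blast

lemma ternE:
  assumes "w \<in> tern a b x y z"
  obtains a1 b1 a2 b2 where "w = a1 + b1" "a1 \<in> a" "b1 \<in> b" "a2 \<in> a" "b2 \<in> b"
      "a2 + b2 \<in> y" "a1 + b2 \<in> x" "a2 + b1 \<in> z"
  using assms unfolding tern_def by blast

lemma part2:
  fixes a b x y z :: "'a::group_add set"
  assumes sa: "is_subgroup a" and sb: "is_subgroup b"
    and c: "\<forall>\<alpha>\<in>a. \<forall>\<beta>\<in>b. \<alpha> + \<beta> = \<beta> + \<alpha>"
    and sx: "is_subgroup x" and sy: "is_subgroup y" and sz: "is_subgroup z"
  shows "is_subgroup (tern a b x y z)"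
  unfolding is_subgroup_def
proof (intro conjI ballI)
  show "0 \<in> tern a b x y z"
    by (rule ternI[of 0 0 0 _ _ 0 0]) (simp_all add: sg0 sa sb sx sy sz)
next
  have cm: "\<And>p q. p \<in> a \<Longrightarrow> q \<in> b \<Longrightarrow> q + p = p + q" using c by force
  fix u v assume "u \<in> tern a b x y z" "v \<in> tern a b x y z"
  then obtain a1 b1 a2 b2 c1 d1 c2 d2 where u: "u = a1 + b1" and h: "a1 \<in> a" "b1 \<in> b" "a2 \<in> a" "b2 \<in> b"
      "a2 + b2 \<in> y" "a1 + b2 \<in> x" "a2 + b1 \<in> z"
    and v: "v = c1 + d1" and k: "c1 \<in> a" "d1 \<in> b" "c2 \<in> a" "d2 \<in> b"
      "c2 + d2 \<in> y" "c1 + d2 \<in> x" "c2 + d1 \<in> z"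
    by (metis ternE)
  have e0: "u + v = (a1 + c1) + (b1 + d1)" unfolding u v by (rule rearr, rule cm, fact, fact)
  have e1: "(a2 + b2) + (c2 + d2) = (a2 + c2) + (b2 + d2)" by (rule rearr, rule cm, fact, fact)
  have e2: "(a1 + b2) + (c1 + d2) = (a1 + c1) + (b2 + d2)" by (rule rearr, rule cm, fact, fact)
  have e3: "(a2 + b1) + (c2 + d1) = (a2 + c2) + (b1 + d1)" by (rule rearr, rule cm, fact, fact)
  have y: "(a2 + c2) + (b2 + d2) \<in> y" unfolding e1[symmetric] using sy h(5) k(5) by (rule sgadd)
  have x: "(a1 + c1) + (b2 + d2) \<in> x" unfolding e2[symmetric] using sx h(6) k(6) by (rule sgadd)
  have z: "(a2 + c2) + (b1 + d1) \<in> z" unfolding e3[symmetric] using sz h(7) k(7) by (rule sgadd)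
  show "u + v \<in> tern a b x y z"
    by (rule ternI[OF e0 _ _ _ _ y x z]) (simp_all add: sgadd sa sb h k)
next
  have cm: "\<And>p q. p \<in> a \<Longrightarrow> q \<in> b \<Longrightarrow> q + p = p + q" using c by force
  fix u assume "u \<in> tern a b x y z"
  then obtain a1 b1 a2 b2 where u: "u = a1 + b1" and h: "a1 \<in> a" "b1 \<in> b" "a2 \<in> a" "b2 \<in> b"
      "a2 + b2 \<in> y" "a1 + b2 \<in> x" "a2 + b1 \<in> z"
    by (rule ternE)
  have n: "\<And>p q. p \<in> a \<Longrightarrow> q \<in> b \<Longrightarrow> - (p + q) = (-p) + (-q)"
  proof -
    fix p q assume "p \<in> a" "q \<in> b"
    hence "-p \<in> a" "-q \<in> b" using sa sb by (simp_all add: sgneg)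
    thus "- (p + q) = (-p) + (-q)" by (intro negcomm cm[symmetric])
  qed
  have e0: "-u = (-a1) + (-b1)" unfolding u using n h by blast
  have y: "(-a2) + (-b2) \<in> y" unfolding n[OF h(3,4), symmetric] using sy h(5) by (rule sgneg)
  have x: "(-a1) + (-b2) \<in> x" unfolding n[OF h(1,4), symmetric] using sx h(6) by (rule sgneg)
  have z: "(-a2) + (-b1) \<in> z" unfolding n[OF h(3,2), symmetric] using sz h(7) by (rule sgneg)
  show "-u \<in> tern a b x y z"
    by (rule ternI[OF e0 _ _ _ _ y x z]) (simp_all add: sgneg sa sb h)
qed

theorem theorem4p1:
  fixes a b :: "'a::group_add set"
  assumes "is_subgroup a" and "is_subgroup b" and "top_rel a b"
  shows "(\<forall>x y z. tern a b x y z = Gamma x a y b z) \<and>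
         ((\<forall>\<alpha>\<in>a. \<forall>\<beta>\<in>b. \<alpha> + \<beta> = \<beta> + \<alpha>) \<longrightarrow>
           (\<forall>x y z. is_subgroup x \<and> is_subgroup y \<and> is_subgroup z \<longrightarrow> is_subgroup (tern a b x y z)))"
  using part1[OF assms] part2[OF assms(1,2)] by blast

end
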